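(* For all integers $1\le j\le k$, writing $[m]=\{0,1,\ldots,m\}$, we have $(j+1)\,d([k-j])\le 2\,d([k-1])$. Equality holds if and only if $j=1$, or $k=3$ and $j=2$.
   Context: For $A,B\subseteq\mathbb{N}=\{0,1,\ldots\}$, $A+B=\{a+b:a\in A,b\in B\}$. For a nonempty finite $C\subseteq\mathbb{N}$, $d(C)$ is the number of sets $B\subseteq\mathbb{N}$ such that $B+D=C$ for some $D\subseteq\mathbb{N}$. *)

theory Defs
  imports Main
begin

definition sumset :: "nat set \<Rightarrow> nat set \<Rightarrow> nat set" where
  "sumset A B = {a + b | a b. a \<in> A \<and> b \<in> B}"

definition dcount :: "nat set \<Rightarrow> nat" where
  "dcount C = card {B :: nat set. \<exists>D :: nat set. sumset B D = C}"

end

theory Submission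
  imports Defs
begin

definition Rs :: "nat \<Rightarrow> nat \<Rightarrow> nat set set" where
 "Rs N G = {B. B \<subseteq> {0..N} \<and> 0 \<in> B \<and> N \<in> B \<and> (\<forall>x\<le>N. \<exists>y\<in>B. y \<le> x \<and> x < y + G)}"

definition rr :: "nat \<Rightarrow> nat \<Rightarrow> nat" where "rr N G = card (Rs N G)"

lemma finite_Rs: "finite (Rs N G)"
proof -
  have "Rs N G \<subseteq> Pow {0..N}" unfolding Rs_def by auto
  thus ?thesis by (rule finite_subset) simp
qed

lemma Rs_0: "G \<ge> 1 \<Longrightarrow> Rs 0 G = {{0}}"
  unfolding Rs_def by auto

lemma Rs_mem_le: "B \<in> Rs N G \<Longrightarrow> y \<in> B \<Longrightarrow> y \<le> N"
  unfolding Rs_def by auto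

lemma Rs_rec:
  assumes "N \<ge> 1" "G \<ge> 1"
  shows "Rs N G = (\<Union>q\<in>{..<min G N}. insert N ` Rs (N - Suc q) G)"
proof
  show "Rs N G \<subseteq> (\<Union>q\<in>{..<min G N}. insert N ` Rs (N - Suc q) G)"
  proof
    fix B assume B: "B \<in> Rs N G"
    define B' where "B' = B - {N}"
    have fin: "finite B'" using B unfolding Rs_def B'_def by (auto intro: finite_subset)
    have "0 \<in> B'" using B assms unfolding Rs_def B'_def by auto
    hence ne: "B' \<noteq> {}" by auto
    define b where "b = Max B'"
    have bB: "b \<in> B'" using fin ne b_def by simp
    have ble: "\<And>y. y \<in> B' \<Longrightarrow> y \<le> b" using fin b_def by simp
    have bN: "b < N" using bB B unfolding B'_def Rs_def by fastforce
    have cov: "\<forall>x\<le>N. \<exists>y\<in>B. y \<le> x \<and> x < y + G" using B unfolding Rs_def by blast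
    have "N - 1 \<le> N" by simp
    then obtain y where y: "y \<in> B" "y \<le> N - 1" "N - 1 < y + G" using cov by blast
    have "y \<in> B'" using y assms unfolding B'_def by auto
    hence "y \<le> b" by (rule ble)
    hence pG: "N - b \<le> G" using y by linarith
    define q where "q = N - b - 1"
    have q: "q < min G N" using pG bN q_def by auto
    have bq: "b = N - Suc q" using q_def bN by simp
    have "B' \<in> Rs b G"
      unfolding Rs_def
    proof (intro CollectI conjI allI impI)
      show "B' \<subseteq> {0..b}" using ble by auto
      show "0 \<in> B'" by fact
      show "b \<in> B'" by fact
      fix x assume "x \<le> b"
      hence "x \<le> N" using bN by simp
      then obtain z where z: "z \<in> B" "z \<le> x" "x < z + G" using cov by blast
      then have "z \<in> B'" using bN \<open>x \<le> b\<close> unfolding B'_def by auto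
      thus "\<exists>y\<in>B'. y \<le> x \<and> x < y + G" using z by blast
    qed
    moreover have "B = insert N B'" using B unfolding B'_def Rs_def by auto
    ultimately show "B \<in> (\<Union>q\<in>{..<min G N}. insert N ` Rs (N - Suc q) G)"
      using q bq by blast
  qed
next
  show "(\<Union>q\<in>{..<min G N}. insert N ` Rs (N - Suc q) G) \<subseteq> Rs N G"
  proof
    fix B assume "B \<in> (\<Union>q\<in>{..<min G N}. insert N ` Rs (N - Suc q) G)"
    then obtain q B' where q: "q < min G N" and B': "B' \<in> Rs (N - Suc q) G" and BB: "B = insert N B'"
      by blast
    show "B \<in> Rs N G"
      unfolding Rs_def
    proof (intro CollectI conjI allI impI)
      show "B \<subseteq> {0..N}" using B' BB unfolding Rs_def by auto
      show "0 \<in> B" using B' BB unfolding Rs_def by auto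
      show "N \<in> B" using BB by auto
      fix x assume x: "x \<le> N"
      show "\<exists>y\<in>B. y \<le> x \<and> x < y + G"
      proof (cases "x \<le> N - Suc q")
        case True
        then obtain z where "z \<in> B'" "z \<le> x" "x < z + G" using B' unfolding Rs_def by blast
        thus ?thesis using BB by blast
      next
        case False
        show ?thesis
        proof (cases "x = N")
          case True thus ?thesis using BB assms by auto
        next
          case False2: False
          have "N - Suc q \<in> B" using B' BB unfolding Rs_def by auto
          moreover have "N - Suc q \<le> x" "x < N - Suc q + G" using False False2 x q by auto
          ultimately show ?thesis by blast
        qed
      qed
    qed
  qed
qed

lemma rr_rec:
  assumes "N \<ge> 1" "G \<ge> 1"
  shows "rr N G = (\<Sum>q<min G N. rr (N - Suc q) G)"
proof -
  have "rr N G = card (\<Union>q\<in>{..<min G N}. insert N ` Rs (N - Suc q) G)"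
    unfolding rr_def using Rs_rec[OF assms] by simp
  also have "\<dots> = (\<Sum>q<min G N. card (insert N ` Rs (N - Suc q) G))"
  proof (rule card_UN_disjoint)
    show "finite {..<min G N}" by simp
    show "\<forall>i\<in>{..<min G N}. finite (insert N ` Rs (N - Suc i) G)" using finite_Rs by blast
    show "\<forall>i\<in>{..<min G N}. \<forall>j\<in>{..<min G N}. i \<noteq> j \<longrightarrow>
      insert N ` Rs (N - Suc i) G \<inter> insert N ` Rs (N - Suc j) G = {}"
    proof (intro ballI impI)
      fix i j assume i: "i \<in> {..<min G N}" and j: "j \<in> {..<min G N}" and ij: "i \<noteq> j"
      show "insert N ` Rs (N - Suc i) G \<inter> insert N ` Rs (N - Suc j) G = {}"
      proof (rule ccontr)
        assume "insert N ` Rs (N - Suc i) G \<inter> insert N ` Rs (N - Suc j) G \<noteq> {}"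
        then obtain B1 B2 where B1: "B1 \<in> Rs (N - Suc i) G" and B2: "B2 \<in> Rs (N - Suc j) G"
          and eq: "insert N B1 = insert N B2" by blast
        have m1: "N - Suc i \<in> B1" using B1 unfolding Rs_def by auto
        have m2: "N - Suc j \<in> B2" using B2 unfolding Rs_def by auto
        show False
        proof (cases "i < j")
          case True
          have "N - Suc i \<in> insert N B2" using m1 eq by blast
          moreover have "N - Suc i \<noteq> N" using i by auto
          ultimately have "N - Suc i \<in> B2" by blast
          hence "N - Suc i \<le> N - Suc j" using B2 Rs_mem_le by blast
          thus False using True i j by auto
        next
          case False
          hence ji: "j < i" using ij by auto
          have "N - Suc j \<in> insert N B1" using m2 eq by blast
          moreover have "N - Suc j \<noteq> N" using j by auto
          ultimately have "N - Suc j \<in> B1" by blast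
          hence "N - Suc j \<le> N - Suc i" using B1 Rs_mem_le by blast
          thus False using ji i j by auto
        qed
      qed
    qed
  qed
  also have "\<dots> = (\<Sum>q<min G N. rr (N - Suc q) G)"
  proof (rule sum.cong[OF refl])
    fix q assume q: "q \<in> {..<min G N}"
    have "inj_on (insert N) (Rs (N - Suc q) G)"
    proof (rule inj_onI)
      fix X Y assume X: "X \<in> Rs (N - Suc q) G" and Y: "Y \<in> Rs (N - Suc q) G" and "insert N X = insert N Y"
      moreover have "N \<notin> X" using X Rs_mem_le q by fastforce
      moreover have "N \<notin> Y" using Y Rs_mem_le q by fastforce
      ultimately show "X = Y" by (metis insert_ident)
    qed
    thus "card (insert N ` Rs (N - Suc q) G) = rr (N - Suc q) G" unfolding rr_def by (rule card_image)
  qed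
  finally show ?thesis .
qed


lemma summands_eq:
  "{B. \<exists>D. sumset B D = {0..m}} = (\<Union>b\<in>{..m}. Rs b (Suc m - b))"
proof
  show "{B. \<exists>D. sumset B D = {0..m}} \<subseteq> (\<Union>b\<in>{..m}. Rs b (Suc m - b))"
  proof
    fix B assume "B \<in> {B. \<exists>D. sumset B D = {0..m}}"
    then obtain D where BD: "sumset B D = {0..m}" by blast
    have mem: "\<And>y z. y \<in> B \<Longrightarrow> z \<in> D \<Longrightarrow> y + z \<le> m"
    proof -
      fix y z assume "y \<in> B" "z \<in> D"
      hence "y + z \<in> sumset B D" unfolding sumset_def by blast
      thus "y + z \<le> m" using BD by simp
    qed
    have "0 \<in> sumset B D" using BD by simp
    then obtain y0 z0 where y0: "y0 \<in> B" "z0 \<in> D" "0 = y0 + z0" unfolding sumset_def by blast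
    have B0: "0 \<in> B" using y0 by simp
    have D0: "0 \<in> D" using y0 by simp
    have Bsub: "B \<subseteq> {0..m}" using mem D0 by fastforce
    have fin: "finite B" using Bsub finite_subset by blast
    define b where "b = Max B"
    have bB: "b \<in> B" using fin B0 b_def by (metis Max_in empty_iff)
    have ble: "\<And>y. y \<in> B \<Longrightarrow> y \<le> b" using fin b_def by simp
    have bm: "b \<le> m" using Bsub bB by auto
    have Dle: "\<And>z. z \<in> D \<Longrightarrow> z \<le> m - b" using mem bB by fastforce
    have "B \<in> Rs b (Suc m - b)"
      unfolding Rs_def
    proof (intro CollectI conjI allI impI)
      show "B \<subseteq> {0..b}" using ble by auto
      show "0 \<in> B" by fact
      show "b \<in> B" by fact
      fix x assume x: "x \<le> b"
      hence "x \<in> sumset B D" using BD bm by simp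
      then obtain y z where yz: "y \<in> B" "z \<in> D" "x = y + z" unfolding sumset_def by blast
      have "z \<le> m - b" using Dle yz by blast
      hence "y \<le> x \<and> x < y + (Suc m - b)" using yz bm by linarith
      thus "\<exists>y\<in>B. y \<le> x \<and> x < y + (Suc m - b)" using yz by blast
    qed
    thus "B \<in> (\<Union>b\<in>{..m}. Rs b (Suc m - b))" using bm by blast
  qed
next
  show "(\<Union>b\<in>{..m}. Rs b (Suc m - b)) \<subseteq> {B. \<exists>D. sumset B D = {0..m}}"
  proof
    fix B assume "B \<in> (\<Union>b\<in>{..m}. Rs b (Suc m - b))"
    then obtain b where bm: "b \<le> m" and B: "B \<in> Rs b (Suc m - b)" by blast
    have "sumset B {0..m - b} = {0..m}"
    proof
      show "sumset B {0..m - b} \<subseteq> {0..m}"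
        using B bm unfolding sumset_def Rs_def by fastforce
      show "{0..m} \<subseteq> sumset B {0..m - b}"
      proof
        fix x assume x: "x \<in> {0..m}"
        show "x \<in> sumset B {0..m - b}"
        proof (cases "x \<le> b")
          case True
          then obtain y where y: "y \<in> B" "y \<le> x" "x < y + (Suc m - b)" using B unfolding Rs_def by blast
          have "x = y + (x - y)" "x - y \<in> {0..m - b}" using y bm by auto
          thus ?thesis using y unfolding sumset_def by blast
        next
          case False
          have "b \<in> B" using B unfolding Rs_def by blast
          moreover have "x = b + (x - b)" "x - b \<in> {0..m - b}" using False x by auto
          ultimately show ?thesis unfolding sumset_def by blast
        qed
      qed
    qed
    thus "B \<in> {B. \<exists>D. sumset B D = {0..m}}" by blast
  qed
qed

lemma dcount_formula: "dcount {0..m} = (\<Sum>b\<le>m. rr b (Suc m - b))"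
proof -
  have "dcount {0..m} = card (\<Union>b\<in>{..m}. Rs b (Suc m - b))"
    unfolding dcount_def summands_eq ..
  also have "\<dots> = (\<Sum>b\<le>m. card (Rs b (Suc m - b)))"
  proof (rule card_UN_disjoint)
    show "finite {..m}" by simp
    show "\<forall>i::nat\<in>{..m}. finite (Rs i (Suc m - i))" using finite_Rs by blast
    show "\<forall>i::nat\<in>{..m}. \<forall>j::nat\<in>{..m}. i \<noteq> j \<longrightarrow> Rs i (Suc m - i) \<inter> Rs j (Suc m - j) = {}"
    proof (intro ballI impI)
      fix i j :: nat assume "i \<noteq> j"
      show "Rs i (Suc m - i) \<inter> Rs j (Suc m - j) = {}"
      proof (rule ccontr)
        assume "Rs i (Suc m - i) \<inter> Rs j (Suc m - j) \<noteq> {}"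
        then obtain B where B1: "B \<in> Rs i (Suc m - i)" and B2: "B \<in> Rs j (Suc m - j)" by blast
        have iB: "i \<in> B" using B1 unfolding Rs_def by blast
        have jB: "j \<in> B" using B2 unfolding Rs_def by blast
        have "i \<le> j" by (rule Rs_mem_le[OF B2 iB])
        moreover have "j \<le> i" by (rule Rs_mem_le[OF B1 jB])
        ultimately have "i \<le> j" "j \<le> i" by auto
        thus False using \<open>i \<noteq> j\<close> by simp
      qed
    qed
  qed
  finally show ?thesis unfolding rr_def .
qed


lemma rr_0: "G \<ge> 1 \<Longrightarrow> rr 0 G = 1"
  unfolding rr_def using Rs_0 by simp

lemma rr_G1: "rr N 1 = 1"
proof (induction N)
  case 0 thus ?case by (simp add: rr_0)
next
  case (Suc n)
  have "rr (Suc n) 1 = (\<Sum>q<min 1 (Suc n). rr (Suc n - Suc q) 1)" by (rule rr_rec) auto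
  also have "\<dots> = rr n 1" by simp
  finally show ?case using Suc by simp
qed

lemma rr_1: "G \<ge> 1 \<Longrightarrow> rr 1 G = 1"
proof -
  assume G: "G \<ge> 1"
  have "rr 1 G = (\<Sum>q<min G 1. rr (1 - Suc q) G)" by (rule rr_rec) (use G in auto)
  also have "\<dots> = rr 0 G" using G by (simp add: min_def)
  finally show ?thesis using rr_0 G by simp
qed

lemma rr_2: "G \<ge> 2 \<Longrightarrow> rr 2 G = 2"
proof -
  assume G: "G \<ge> 2"
  have "rr 2 G = (\<Sum>q<min G 2. rr (2 - Suc q) G)" by (rule rr_rec) (use G in auto)
  also have "\<dots> = (\<Sum>q<2. rr (2 - Suc q) G)" using G by (simp add: min_def)
  also have "\<dots> = rr 1 G + rr 0 G" by (simp add: numeral_2_eq_2)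
  finally show ?thesis using rr_0 rr_1 G by simp
qed

lemma rr_fib:
  assumes "G \<ge> 2" "N \<ge> 1"
  shows "rr N G + rr (N - 1) G \<le> rr (Suc N) G"
proof -
  have "rr (Suc N) G = (\<Sum>q<min G (Suc N). rr (Suc N - Suc q) G)" by (rule rr_rec) (use assms in auto)
  also have "\<dots> \<ge> (\<Sum>q\<in>{0,1}. rr (Suc N - Suc q) G)"
    by (rule sum_mono2) (use assms in auto)
  also have "(\<Sum>q\<in>{0,1}. rr (Suc N - Suc q) G) = rr N G + rr (N - 1) G" by simp
  finally show ?thesis .
qed

lemma rr_dbl:
  assumes "G \<ge> 1" "N \<ge> 1"
  shows "rr N G \<le> 2 * rr (N - 1) G"
proof (cases "N = 1")
  case True thus ?thesis using rr_0 rr_1 assms by simp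
next
  case False
  hence N2: "N \<ge> 2" using assms by simp
  define M where "M = min G N"
  have M1: "M \<ge> 1" using assms M_def by simp
  have "rr N G = (\<Sum>q<M. rr (N - Suc q) G)" unfolding M_def by (rule rr_rec) (use assms in auto)
  also have "\<dots> = (\<Sum>q<Suc (M - 1). rr (N - Suc q) G)" using M1 by simp
  also have "\<dots> = rr (N - 1) G + (\<Sum>q<M - 1. rr (N - Suc (Suc q)) G)"
    by (simp only: sum.lessThan_Suc_shift) simp
  also have "(\<Sum>q<M - 1. rr (N - Suc (Suc q)) G) = (\<Sum>q<M - 1. rr (N - 1 - Suc q) G)" by simp
  also have "\<dots> \<le> (\<Sum>q<min G (N - 1). rr (N - 1 - Suc q) G)"
    by (rule sum_mono2) (auto simp: M_def)
  also have "(\<Sum>q<min G (N - 1). rr (N - 1 - Suc q) G) = rr (N - 1) G"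
    by (rule rr_rec[symmetric]) (use assms N2 in auto)
  finally show ?thesis by simp
qed

lemma rr_step:
  assumes "G \<ge> 2" "N \<ge> 1"
  shows "3 * rr N G \<le> 2 * rr (Suc N) G"
  using rr_fib[OF assms] rr_dbl[of G N] assms by linarith

abbreviation dd :: "nat \<Rightarrow> nat" where "dd m \<equiv> dcount {0..m}"

lemma dd_Suc: "dd (Suc m) = 1 + (\<Sum>b\<le>m. rr (Suc b) (Suc m - b))"
proof -
  have "dd (Suc m) = (\<Sum>b\<le>Suc m. rr b (Suc (Suc m) - b))" by (rule dcount_formula)
  also have "\<dots> = rr 0 (Suc (Suc m)) + (\<Sum>b\<le>m. rr (Suc b) (Suc (Suc m) - Suc b))"
    using sum.atMost_Suc_shift[of "\<lambda>b. rr b (Suc (Suc m) - b)" m] by simp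
  finally show ?thesis using rr_0 by simp
qed

lemma dd_pos: "dd m \<ge> 1"
proof -
  have "rr 0 (Suc m) \<le> (\<Sum>b\<le>m. rr b (Suc m - b))"
    using member_le_sum[of 0 "{..m}" "\<lambda>b. rr b (Suc m - b)"] by simp
  thus ?thesis using dcount_formula[of m] rr_0[of "Suc m"] by simp
qed

lemma dd_1: "dd 1 = 2"
  using dd_Suc[of 0] rr_G1 by simp

lemma dd_2: "dd 2 = 3"
proof -
  have "dd 2 = 1 + (\<Sum>b\<le>1. rr (Suc b) (Suc 1 - b))" using dd_Suc[of 1] by (simp add: numeral_2_eq_2)
  also have "\<dots> = 1 + rr 1 2 + rr 2 1" by (simp add: numeral_2_eq_2)
  finally show ?thesis using rr_1 rr_G1 by simp
qed

lemma key:
  "3 * dd m \<le> 2 * dd (Suc m) \<and> (m \<noteq> 1 \<longrightarrow> 3 * dd m < 2 * dd (Suc m))"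
proof (cases "m = 0")
  case True
  have "dd 0 = 1" using dcount_formula[of 0] rr_0 by simp
  thus ?thesis using True dd_1 by simp
next
  case False
  define f where "f b = 2 * rr (Suc b) (Suc m - b)" for b
  define g where "g b = 3 * rr b (Suc m - b)" for b
  define e where "e b = (if b = 0 then 1 else 0) + (if b = m then 1 else (0::nat))" for b
  have pt: "g b \<le> f b + e b" if "b \<le> m" for b
  proof -
    have "b = 0 \<or> b = m \<or> (1 \<le> b \<and> b < m)" using that by linarith
    thus ?thesis
    proof (elim disjE)
      assume 1: "b = 0" thus ?thesis using rr_0 rr_1 False unfolding f_def g_def e_def by simp
    next
      assume 2: "b = m" thus ?thesis using rr_G1 False unfolding f_def g_def e_def by simp
    next
      assume 3: "1 \<le> b \<and> b < m"
      have "3 * rr b (Suc m - b) \<le> 2 * rr (Suc b) (Suc m - b)" by (rule rr_step) (use 3 in auto)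
      thus ?thesis unfolding f_def g_def by simp
    qed
  qed
  have se: "(\<Sum>b\<le>m. e b) = 2"
    unfolding e_def sum.distrib using False by (simp add: sum.delta)
  have dm: "dd m = (\<Sum>b\<le>m. rr b (Suc m - b))" by (rule dcount_formula)
  have "3 * dd m = (\<Sum>b\<le>m. g b)" unfolding dm g_def by (simp add: sum_distrib_left)
  have ds: "2 * dd (Suc m) = 2 + (\<Sum>b\<le>m. f b)" unfolding dd_Suc f_def by (simp add: sum_distrib_left)
  have "(\<Sum>b\<le>m. g b) \<le> (\<Sum>b\<le>m. f b + e b)" by (rule sum_mono) (use pt in auto)
  hence le: "3 * dd m \<le> 2 * dd (Suc m)"
    using \<open>3 * dd m = _\<close> ds se by (simp add: sum.distrib)
  moreover have "m \<noteq> 1 \<longrightarrow> 3 * dd m < 2 * dd (Suc m)"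
  proof
    assume "m \<noteq> 1"
    hence m2: "m \<ge> 2" using False by simp
    have "(\<Sum>b\<le>m. g b) < (\<Sum>b\<le>m. f b + e b)"
    proof (rule sum_strict_mono_ex1)
      show "finite {..m}" by simp
      show "\<forall>x\<in>{..m}. g x \<le> f x + e x" using pt by auto
      have "g 1 = 3" using rr_1 m2 unfolding g_def by simp
      moreover have "f 1 = 4" using rr_2 m2 unfolding f_def by (simp add: numeral_2_eq_2)
      ultimately show "\<exists>a\<in>{..m}. g a < f a + e a" using m2 by (intro bexI[of _ 1]) auto
    qed
    thus "3 * dd m < 2 * dd (Suc m)"
      using \<open>3 * dd m = _\<close> ds se by (simp add: sum.distrib)
  qed
  ultimately show ?thesis by blast
qed

lemma dd_mono_strict: "i \<ge> 1 \<Longrightarrow> dd n < dd (n + i)"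
proof (induction i)
  case 0 thus ?case by simp
next
  case (Suc i)
  have "dd (n + i) < dd (n + Suc i)" using key[of "n + i"] dd_pos[of "n + i"] by simp
  thus ?case using Suc by (cases "i = 0") auto
qed

lemma gen_le:
  "i \<ge> 1 \<Longrightarrow> (i + 2) * dd n \<le> 2 * dd (n + i)"
proof (induction i)
  case 0 thus ?case by simp
next
  case (Suc i)
  show ?case
  proof (cases "i = 0")
    case True
    have "3 * dd n \<le> 2 * dd (Suc n)" using key[of n] by blast
    thus ?thesis using True by simp
  next
    case False
    hence IH: "(i + 2) * dd n \<le> 2 * dd (n + i)" using Suc by simp
    have "dd n < dd (n + i)" using dd_mono_strict False by simp
    moreover have "3 * dd (n + i) \<le> 2 * dd (n + Suc i)" using key[of "n + i"] by simp
    ultimately show ?thesis using IH by simp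
  qed
qed

lemma gen_lt:
  assumes "i \<ge> 1" "i \<ge> 2 \<or> n \<noteq> 1"
  shows "(i + 2) * dd n < 2 * dd (n + i)"
proof (cases "i = 1")
  case True
  hence "n \<noteq> 1" using assms by simp
  hence "3 * dd n < 2 * dd (Suc n)" using key[of n] by blast
  thus ?thesis using True by simp
next
  case False
  then obtain i' where i': "i = Suc i'" "i' \<ge> 1" using assms by (cases i) auto
  have IH: "(i' + 2) * dd n \<le> 2 * dd (n + i')" using gen_le i' by blast
  have "dd n < dd (n + i')" using dd_mono_strict i' by simp
  moreover have "3 * dd (n + i') \<le> 2 * dd (n + Suc i')" using key[of "n + i'"] by simp
  ultimately show ?thesis using IH i' by simp
qed

theorem mainTheorem8:
  fixes j k :: nat
  assumes "1 \<le> j" and "j \<le> k"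
  shows "(j + 1) * dcount {0..k - j} \<le> 2 * dcount {0..k - 1}
    \<and> ((j + 1) * dcount {0..k - j} = 2 * dcount {0..k - 1}
         \<longleftrightarrow> (j = 1 \<or> (k = 3 \<and> j = 2)))"
proof (cases "j = 1")
  case True thus ?thesis by simp
next
  case False
  define i where "i = j - 1"
  define n where "n = k - j"
  have i1: "i \<ge> 1" using False assms i_def by simp
  have e1: "k - 1 = n + i" using assms i_def n_def by simp
  have e2: "j + 1 = i + 2" using assms i_def by simp
  have le: "(j + 1) * dcount {0..k - j} \<le> 2 * dcount {0..k - 1}"
    unfolding e1 e2 n_def[symmetric] by (rule gen_le[OF i1])
  show ?thesis
  proof (cases "k = 3 \<and> j = 2")
    case True
    hence h: "k - 1 = 2" "k - j = 1" "j + 1 = 3" by auto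
    have "3 * dd 1 = 2 * dd 2" using dd_1 dd_2 by simp
    thus ?thesis using le True unfolding h by simp
  next
    case F2: False
    hence "i \<ge> 2 \<or> n \<noteq> 1" using i_def n_def assms False by auto
    hence "(i + 2) * dd n < 2 * dd (n + i)" using gen_lt i1 by blast
    hence "(j + 1) * dcount {0..k - j} < 2 * dcount {0..k - 1}"
      unfolding e1 e2 n_def .
    thus ?thesis using F2 False by simp
  qed
qed

end
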